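(* Let $d,m,n\ge1$, $\gamma\in[0,1)$, $\alpha,\beta>0$ and $D=3d+2m+2$. Let $\mathbf P,\mathbf V\in\mathbb R^{D\times D}$ be partitioned conformally with $D=(2d+m+1)+(d+m+1)$ as $\mathbf P=\begin{bmatrix}\mathbf P_{11}&\mathbf P_{12}\\ \mathbf P_{21}&\mathbf P_{22}\end{bmatrix}$, $\mathbf V=\begin{bmatrix}\mathbf V_{11}&\mathbf V_{12}\\ \mathbf V_{21}&\mathbf V_{22}\end{bmatrix}$, and suppose $$\mathbf P_{12}=\begin{bmatrix}\mathbf 0_{d\times1}&\mathbf 0_{d\times m}&-\mathbf I_d\\ \mathbf 0_{d\times1}&\mathbf 0_{d\times m}&\mathbf I_d\\ 1&\mathbf 0_{1\times m}&\mathbf 0_{1\times d}\\ \mathbf 0_{m\times1}&\mathbf 0_{m\times m}&\mathbf 0_{m\times d}\end{bmatrix},\qquad \mathbf P_{22}=\mathbf 0,$$ the last $d+m$ rows of $\mathbf V_{21}$ equal $\begin{bmatrix}\mathbf 0_{m\times d}&\mathbf 0_{m\times d}&\mathbf 0_{m\times1}&\alpha\mathbf I_m\\ \beta\mathbf I_d&\mathbf 0_{d\times d}&\mathbf 0_{d\times1}&\mathbf 0_{d\times m}\end{bmatrix}$, the last $d+m$ rows of $\mathbf V_{22}$ are zero, and $\mathbf P_{11},\mathbf P_{21},\mathbf V_{11},\mathbf V_{12}$ and the first rows of $\mathbf V_{21},\mathbf V_{22}$ are arbitrary. Then for every $c\ne0$ and every input, $\mathsf{TF}_{(c\mathbf P,c^{-1}\mathbf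 V)}(\mathbf H)=[\boldsymbol\lambda_{\mathrm{AC}};\mathbf w_{\mathrm{AC}}]$, i.e. the transformer exactly implements the batch actor-critic update.
   Context: A linear self-attention block with parameters $(\mathbf P,\mathbf V)$ maps $\mathbf H\in\mathbb R^{D\times(n+1)}$ to $\mathbf H_{\mathrm{out}}=\mathbf H+\frac1n(\mathbf V\mathbf H)(\mathbf H^\top\mathbf P\mathbf H)$; here the readout $\mathsf{TF}_{(\mathbf P,\mathbf V)}(\mathbf H)\in\mathbb R^{m+d}$ is the vector of the last $d+m$ entries of the last column of $\mathbf H_{\mathrm{out}}$. Actor-critic data: value feature map $\boldsymbol\phi_V:\mathcal S\to\mathbb R^d$, policy feature map $\boldsymbol\phi_\pi:\mathcal S\times\mathcal A\to\mathbb R^m$ (finite action set), actor parameter $\boldsymbol\lambda\in\mathbb R^m$, critic parameter $\mathbf w\in\mathbb R^d$, softmax policy $\pi_{\boldsymbol\lambda}(a\mid s)\propto\exp(\boldsymbol\lambda^\top\boldsymbol\phi_\pi(s,a))$, score $\mathbf g_{\boldsymbol\lambda}(s,a)=\boldsymbol\phi_\pi(s,a)-\sum_b\boldsymbol\phi_\pi(s,b)\pi_{\boldsymbol\lambda}(b\mid s)$, and a trajectory $(s_0,a_0,r_1,\dots,r_n,s_n,a_n)$. Let $\delta_i=r_{i+1}+\gamma\mathbf w^\top\boldsymbol\phi_V(s_{i+1})-\mathbf w^\top\boldsymbol\phi_V(s_i)$. The batch actor-critic update is $\mathbf w_{\mathrm{AC}}=\mathbf w+\frac{\beta}{n}\sum_{i=0}^{n-1}\delta_i\boldsymbol\phi_V(s_i)$,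 $\boldsymbol\lambda_{\mathrm{AC}}=\boldsymbol\lambda+\frac{\alpha}{n}\sum_{i=0}^{n-1}\gamma^i\delta_i\mathbf g_{\boldsymbol\lambda}(s_i,a_i)$. The prompt $\mathbf H\in\mathbb R^{D\times(n+1)}$ has, for $i=0,\dots,n-1$, column $i+1$ equal to $[\boldsymbol\phi_V(s_i);\gamma\boldsymbol\phi_V(s_{i+1});r_{i+1};\gamma^i\mathbf g_{\boldsymbol\lambda}(s_i,a_i);\mathbf 0_{d+m+1}]$, and last column $[\mathbf 0_{2d+m+1};1;\boldsymbol\lambda;\mathbf w]$. *)

theory Defs
  imports Complex_Main
begin

text \<open>Vectors in R^k and matrices are represented as functions on nat (resp. nat x nat),
  with all relevant indices explicitly bounded; indices are 0-based.\<close>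

definition inner_n :: "nat \<Rightarrow> (nat \<Rightarrow> real) \<Rightarrow> (nat \<Rightarrow> real) \<Rightarrow> real" where
  "inner_n k x y = (\<Sum>i<k. x i * y i)"

definition policy :: "nat \<Rightarrow> ('s \<Rightarrow> 'a::finite \<Rightarrow> nat \<Rightarrow> real) \<Rightarrow> (nat \<Rightarrow> real) \<Rightarrow> 's \<Rightarrow> 'a \<Rightarrow> real" where
  "policy m phiP lam s a =
     exp (inner_n m lam (phiP s a)) / (\<Sum>b\<in>UNIV. exp (inner_n m lam (phiP s b)))"

definition score :: "nat \<Rightarrow> ('s \<Rightarrow> 'a::finite \<Rightarrow> nat \<Rightarrow> real) \<Rightarrow> (nat \<Rightarrow> real) \<Rightarrow> 's \<Rightarrow> 'a \<Rightarrow> nat \<Rightarrow> real" where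
  "score m phiP lam s a = (\<lambda>k. phiP s a k - (\<Sum>b\<in>UNIV. phiP s b k * policy m phiP lam s b))"

text \<open>TD error delta_i; rewards r (Suc i) = r_{i+1}, states s i = s_i.\<close>
definition td_err :: "nat \<Rightarrow> real \<Rightarrow> ('s \<Rightarrow> nat \<Rightarrow> real) \<Rightarrow> (nat \<Rightarrow> real) \<Rightarrow> (nat \<Rightarrow> real) \<Rightarrow> (nat \<Rightarrow> 's) \<Rightarrow> nat \<Rightarrow> real" where
  "td_err d gam phiV w r s i =
     r (Suc i) + gam * inner_n d w (phiV (s (Suc i))) - inner_n d w (phiV (s i))"

definition w_AC :: "nat \<Rightarrow> nat \<Rightarrow> real \<Rightarrow> real \<Rightarrow> ('s \<Rightarrow> nat \<Rightarrow> real) \<Rightarrow> (nat \<Rightarrow> real) \<Rightarrow> (nat \<Rightarrow> real) \<Rightarrow> (nat \<Rightarrow> 's) \<Rightarrow> nat \<Rightarrow> real" where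
  "w_AC d n beta gam phiV w r s =
     (\<lambda>k. w k + beta / real n * (\<Sum>i<n. td_err d gam phiV w r s i * phiV (s i) k))"

definition lam_AC :: "nat \<Rightarrow> nat \<Rightarrow> nat \<Rightarrow> real \<Rightarrow> real \<Rightarrow> ('s \<Rightarrow> nat \<Rightarrow> real) \<Rightarrow> ('s \<Rightarrow> 'a::finite \<Rightarrow> nat \<Rightarrow> real)
     \<Rightarrow> (nat \<Rightarrow> real) \<Rightarrow> (nat \<Rightarrow> real) \<Rightarrow> (nat \<Rightarrow> real) \<Rightarrow> (nat \<Rightarrow> 's) \<Rightarrow> (nat \<Rightarrow> 'a) \<Rightarrow> nat \<Rightarrow> real" where
  "lam_AC d m n alpha gam phiV phiP lam w r s a =
     (\<lambda>k. lam k + alpha / real n *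
        (\<Sum>i<n. gam ^ i * td_err d gam phiV w r s i * score m phiP lam (s i) (a i) k))"

text \<open>The prompt H (D x (n+1)), 0-based: column j < n holds the data of step i = j,
  column n is the last column.\<close>
definition ac_prompt :: "nat \<Rightarrow> nat \<Rightarrow> nat \<Rightarrow> real \<Rightarrow> ('s \<Rightarrow> nat \<Rightarrow> real) \<Rightarrow> ('s \<Rightarrow> 'a::finite \<Rightarrow> nat \<Rightarrow> real)
     \<Rightarrow> (nat \<Rightarrow> real) \<Rightarrow> (nat \<Rightarrow> real) \<Rightarrow> (nat \<Rightarrow> real) \<Rightarrow> (nat \<Rightarrow> 's) \<Rightarrow> (nat \<Rightarrow> 'a) \<Rightarrow> nat \<Rightarrow> nat \<Rightarrow> real" where
  "ac_prompt d m n gam phiV phiP lam w r s a = (\<lambda>row j.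
     if j < n then
       (if row < d then phiV (s j) row
        else if row < 2*d then gam * phiV (s (Suc j)) (row - d)
        else if row = 2*d then r (Suc j)
        else if row < 2*d + 1 + m then gam ^ j * score m phiP lam (s j) (a j) (row - (2*d + 1))
        else 0)
     else if j = n then
       (if row < 2*d + m + 1 then 0
        else if row = 2*d + m + 1 then 1
        else if row < 2*d + 2*m + 2 then lam (row - (2*d + m + 2))
        else if row < 3*d + 2*m + 2 then w (row - (2*d + 2*m + 2))
        else 0)
     else 0)"

definition lsa_out :: "nat \<Rightarrow> nat \<Rightarrow> (nat \<Rightarrow> nat \<Rightarrow> real) \<Rightarrow> (nat \<Rightarrow> nat \<Rightarrow> real) \<Rightarrow> (nat \<Rightarrow> nat \<Rightarrow> real) \<Rightarrow> nat \<Rightarrow> nat \<Rightarrow> real" where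
  "lsa_out D n P V H = (\<lambda>i j. H i j + 1 / real n *
     (\<Sum>k\<le>n. (\<Sum>l<D. V i l * H l k) * (\<Sum>p<D. \<Sum>q<D. H p k * P p q * H q j)))"

definition tf_readout :: "nat \<Rightarrow> nat \<Rightarrow> nat \<Rightarrow> (nat \<Rightarrow> nat \<Rightarrow> real) \<Rightarrow> (nat \<Rightarrow> nat \<Rightarrow> real) \<Rightarrow> (nat \<Rightarrow> nat \<Rightarrow> real) \<Rightarrow> nat \<Rightarrow> real" where
  "tf_readout D n e P V H = (\<lambda>k. lsa_out D n P V H (D - e + k) n)"

text \<open>Structural hypotheses on P (blocks P12, P22) with block offset b = 2d+m+1.\<close>
definition P_struct :: "nat \<Rightarrow> nat \<Rightarrow> (nat \<Rightarrow> nat \<Rightarrow> real) \<Rightarrow> bool" where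
  "P_struct d m P \<longleftrightarrow>
     (\<forall>i < 2*d + m + 1. \<forall>c \<le> d + m.
        P i (2*d + m + 1 + c) =
          (if i < d \<and> c = m + 1 + i then -1
           else if d \<le> i \<and> i < 2*d \<and> c = m + 1 + (i - d) then 1
           else if i = 2*d \<and> c = 0 then 1
           else 0)) \<and>
     (\<forall>i \<le> d + m. \<forall>c \<le> d + m. P (2*d + m + 1 + i) (2*d + m + 1 + c) = 0)"

text \<open>Structural hypotheses on V: last d+m rows of V21 and V22.\<close>
definition V_struct :: "nat \<Rightarrow> nat \<Rightarrow> real \<Rightarrow> real \<Rightarrow> (nat \<Rightarrow> nat \<Rightarrow> real) \<Rightarrow> bool" where
  "V_struct d m alpha beta V \<longleftrightarrow>
     (\<forall>i. 1 \<le> i \<and> i \<le> d + m \<longrightarrow>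
        (\<forall>c < 2*d + m + 1.
           V (2*d + m + 1 + i) c =
             (if i \<le> m \<and> c = 2*d + 1 + (i - 1) then alpha
              else if m < i \<and> c = i - m - 1 then beta
              else 0)) \<and>
        (\<forall>c \<le> d + m. V (2*d + m + 1 + i) (2*d + m + 1 + c) = 0))"

end

theory Submission
  imports Defs
begin

lemma sum_split_add:
  fixes a e :: nat
  shows "(\<Sum>i<a+e. f i) = (\<Sum>i<a. f i) + (\<Sum>i<e. f (a+i)) "
  by (induction e) (simp_all add: add.assoc)

lemma sum_lessThan_cong_zero:
  fixes a N :: nat
  assumes "a \<le> N" "\<And>i. a \<le> i \<Longrightarrow> i < N \<Longrightarrow> f i = (0::real)"
  shows "(\<Sum>i<N. f i) = (\<Sum>i<a. f i)"
proof -
  have "(\<Sum>i<N. f i) = (\<Sum>i<a + (N - a). f i)" using assms(1) by simp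
  also have "\<dots> = (\<Sum>i<a. f i)" by (simp add: sum_split_add assms(2))
  finally show ?thesis .
qed

lemma sum_three:
  fixes d N :: nat
  assumes "2*d < N" "\<And>p. 2*d < p \<Longrightarrow> p < N \<Longrightarrow> f p = (0::real)"
  shows "(\<Sum>p<N. f p) = (\<Sum>p<d. f p) + (\<Sum>p<d. f (d+p)) + f (2*d)"
proof -
  have "(\<Sum>p<N. f p) = (\<Sum>p<Suc (d+d). f p)"
    using assms by (intro sum_lessThan_cong_zero) auto
  also have "\<dots> = (\<Sum>p<d. f p) + (\<Sum>p<d. f (d+p)) + f (2*d)"
    by (simp add: sum_split_add mult_2)
  finally show ?thesis .
qed

theorem theorem3:
  fixes d m n :: nat and gam alpha beta c :: real
    and P V :: "nat \<Rightarrow> nat \<Rightarrow> real"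
    and phiV :: "'s \<Rightarrow> nat \<Rightarrow> real"
    and phiP :: "'s \<Rightarrow> 'a::finite \<Rightarrow> nat \<Rightarrow> real"
    and lam w r :: "nat \<Rightarrow> real"
    and s :: "nat \<Rightarrow> 's" and a :: "nat \<Rightarrow> 'a"
  assumes "d \<ge> 1" and "m \<ge> 1" and "n \<ge> 1"
    and "0 \<le> gam" and "gam < 1" and "alpha > 0" and "beta > 0"
    and "P_struct d m P" and "V_struct d m alpha beta V"
    and "c \<noteq> 0"
  shows "\<forall>k < m + d.
     tf_readout (3*d + 2*m + 2) n (d + m) (\<lambda>i j. c * P i j) (\<lambda>i j. V i j / c)
       (ac_prompt d m n gam phiV phiP lam w r s a) k
     = (if k < m then lam_AC d m n alpha gam phiV phiP lam w r s a k
        else w_AC d n beta gam phiV w r s (k - m))"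
proof (intro allI impI)
  fix k assume k: "k < m + d"
  define H where "H = ac_prompt d m n gam phiV phiP lam w r s a"
  define b where "b = 2*d + m + 1"
  define D where "D = 3*d + 2*m + 2"
  have PS1: "\<And>i cc. i < b \<Longrightarrow> cc \<le> d + m \<Longrightarrow> P i (b + cc) =
          (if i < d \<and> cc = m + 1 + i then -1
           else if d \<le> i \<and> i < 2*d \<and> cc = m + 1 + (i - d) then 1
           else if i = 2*d \<and> cc = 0 then 1
           else 0)"
    using assms(8) unfolding P_struct_def b_def by blast
  have PS2: "\<And>i cc. i \<le> d + m \<Longrightarrow> cc \<le> d + m \<Longrightarrow> P (b + i) (b + cc) = 0"
    using assms(8) unfolding P_struct_def b_def by blast
  have Hn: "\<And>cc. H (b + cc) n = (if cc = 0 then 1 else if cc \<le> m then lam (cc - 1)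
              else if cc \<le> d + m then w (cc - m - 1) else 0)"
    unfolding H_def ac_prompt_def b_def by auto
  have Hn0: "\<And>q. q < b \<Longrightarrow> H q n = 0"
    unfolding H_def ac_prompt_def b_def by auto
  have Deq: "D = b + (d+m+1)" by (simp add: D_def b_def)
  have Q: "(\<Sum>q<D. P p q * H q n) = (if p < d then - w p else if p < 2*d then w (p - d)
            else if p = 2*d then 1 else 0)" if p: "p < D" for p
  proof -
    have "(\<Sum>q<D. P p q * H q n) = (\<Sum>q<b + (d+m+1). P p q * H q n)"
      by (simp only: Deq)
    also have "\<dots> = (\<Sum>cc<d+m+1. P p (b+cc) * H (b+cc) n)"
      by (simp add: sum_split_add Hn0)
    also have "\<dots> = (if p < d then - w p else if p < 2*d then w (p - d)
            else if p = 2*d then 1 else 0)"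
    proof (cases "p < b")
      case True
      have "(\<Sum>cc<d+m+1. P p (b+cc) * H (b+cc) n) =
         (\<Sum>cc<d+m+1. (if p < d \<and> cc = m + 1 + p then -1
           else if d \<le> p \<and> p < 2*d \<and> cc = m + 1 + (p - d) then 1
           else if p = 2*d \<and> cc = 0 then 1
           else 0) * H (b+cc) n)"
        using True PS1 by (intro sum.cong) auto
      also have "\<dots> = (if p < d then - w p else if p < 2*d then w (p - d)
            else if p = 2*d then 1 else 0)"
      proof -
        consider "p < d" | "d \<le> p \<and> p < 2*d" | "p = 2*d" | "2*d < p" by linarith
        then show ?thesis
        proof cases
          case 1
          have "(\<Sum>cc<d+m+1. (if p < d \<and> cc = m + 1 + p then -1
           else if d \<le> p \<and> p < 2*d \<and> cc = m + 1 + (p - d) then 1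
           else if p = 2*d \<and> cc = 0 then 1
           else 0) * H (b+cc) n) = (\<Sum>cc<d+m+1. if cc = m + 1 + p then - H (b+cc) n else 0)"
            using 1 by (intro sum.cong) auto
          also have "\<dots> = - w p" using 1 Hn[of "m+1+p"] by (subst sum.delta) auto
          finally show ?thesis using 1 by simp
        next
          case 2
          have "(\<Sum>cc<d+m+1. (if p < d \<and> cc = m + 1 + p then -1
           else if d \<le> p \<and> p < 2*d \<and> cc = m + 1 + (p - d) then 1
           else if p = 2*d \<and> cc = 0 then 1
           else 0) * H (b+cc) n) = (\<Sum>cc<d+m+1. if cc = m + 1 + (p-d) then H (b+cc) n else 0)"
            using 2 by (intro sum.cong) auto
          also have "\<dots> = w (p - d)" using 2 Hn[of "m+1+(p-d)"] by (subst sum.delta) auto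
          finally show ?thesis using 2 by simp
        next
          case 3
          have "(\<Sum>cc<d+m+1. (if p < d \<and> cc = m + 1 + p then -1
           else if d \<le> p \<and> p < 2*d \<and> cc = m + 1 + (p - d) then 1
           else if p = 2*d \<and> cc = 0 then 1
           else 0) * H (b+cc) n) = (\<Sum>cc<d+m+1. if cc = 0 then H (b+cc) n else 0)"
            using 3 by (intro sum.cong) auto
          also have "\<dots> = 1" using 3 Hn[of 0] by (subst sum.delta) auto
          finally show ?thesis using 3 by simp
        next
          case 4
          then show ?thesis by simp
        qed
      qed
      finally show ?thesis .
    next
      case False
      have "(\<Sum>cc<d+m+1. P p (b+cc) * H (b+cc) n) = 0"
      proof (intro sum.neutral ballI)
        fix cc assume "cc \<in> {..<d+m+1}"
        then have "P (b + (p - b)) (b+cc) = 0" using False p by (intro PS2) (auto simp: D_def b_def)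
        then show "P p (b+cc) * H (b+cc) n = 0" using False by simp
      qed
      then show ?thesis using False by (simp add: b_def)
    qed
    finally show ?thesis .
  qed
  define Qv where "Qv p = (if p < d then - w p else if p < 2*d then w (p - d)
            else if p = 2*d then 1 else (0::real))" for p
  define row where "row = b + Suc k"
  have rowD: "3*d + 2*m + 2 - (d + m) + k = row" by (simp add: row_def b_def)
  have T: "(\<Sum>p<D. \<Sum>q<D. H p kk * (c * P p q) * H q n) = c * (\<Sum>p<D. H p kk * Qv p)" for kk
  proof -
    have "(\<Sum>p<D. \<Sum>q<D. H p kk * (c * P p q) * H q n) = (\<Sum>p<D. c * (H p kk * (\<Sum>q<D. P p q * H q n)))"
      by (intro sum.cong refl) (simp add: sum_distrib_left ac_simps)
    also have "\<dots> = (\<Sum>p<D. c * (H p kk * Qv p))"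
      by (intro sum.cong refl) (simp add: Q Qv_def)
    finally show ?thesis by (simp add: sum_distrib_left)
  qed
  have Tn: "(\<Sum>p<D. H p n * Qv p) = 0"
  proof (intro sum.neutral ballI)
    fix p assume "p \<in> {..<D}"
    show "H p n * Qv p = 0"
    proof (cases "p < b")
      case True then show ?thesis by (simp add: Hn0)
    next
      case False then show ?thesis by (simp add: Qv_def b_def)
    qed
  qed
  have Tk: "(\<Sum>p<D. H p kk * Qv p) = td_err d gam phiV w r s kk" if kk: "kk < n" for kk
  proof -
    have "(\<Sum>p<D. H p kk * Qv p) = (\<Sum>p<d. H p kk * Qv p) + (\<Sum>p<d. H (d+p) kk * Qv (d+p))
        + H (2*d) kk * Qv (2*d)"
      by (rule sum_three) (auto simp: D_def Qv_def)
    also have "\<dots> = (\<Sum>p<d. - (w p * phiV (s kk) p)) + gam * (\<Sum>p<d. w p * phiV (s (Suc kk)) p)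
        + r (Suc kk)"
      using kk by (simp add: Qv_def H_def ac_prompt_def sum_distrib_left ac_simps)
    also have "\<dots> = td_err d gam phiV w r s kk"
      by (simp add: td_err_def inner_n_def sum_negf)
    finally show ?thesis .
  qed
  have kk1: "1 \<le> Suc k \<and> Suc k \<le> d + m" using k by simp
  note VSk = mp[OF spec[OF assms(9)[unfolded V_struct_def], of "Suc k"] kk1]
  have VS1: "\<And>cc. cc < b \<Longrightarrow> V row cc =
      (if Suc k \<le> m \<and> cc = 2*d + 1 + (Suc k - 1) then alpha
       else if m < Suc k \<and> cc = Suc k - m - 1 then beta else 0)"
    using VSk unfolding row_def b_def by blast
  have VS2: "\<And>cc. cc \<le> d + m \<Longrightarrow> V row (b + cc) = 0"
    using VSk unfolding row_def b_def by blast
  define tgt where "tgt = (if k < m then 2*d + 1 + k else k - m)"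
  define co where "co = (if k < m then alpha else beta)"
  have tgtb: "tgt < b" using k by (auto simp: tgt_def b_def)
  have Vs: "(\<Sum>l<D. V row l / c * H l kk) = (co * H tgt kk) / c" for kk
  proof -
    have "(\<Sum>l<D. V row l / c * H l kk) = (\<Sum>l<b + (d+m+1). V row l / c * H l kk)"
      by (simp only: Deq)
    also have "\<dots> = (\<Sum>l<b. V row l / c * H l kk)"
      by (simp add: sum_split_add VS2)
    also have "\<dots> = (\<Sum>l<b. if l = tgt then co * H l kk / c else 0)"
      by (intro sum.cong refl) (auto simp: VS1 tgt_def co_def)
    also have "\<dots> = (co * H tgt kk) / c"
      using tgtb by (subst sum.delta) auto
    finally show ?thesis .
  qed
  have Hrow: "H row n = (if k < m then lam k else w (k - m))"
    using k by (auto simp: H_def ac_prompt_def row_def b_def)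
  have Htgt: "H tgt kk = (if k < m then gam ^ kk * score m phiP lam (s kk) (a kk) k
      else phiV (s kk) (k - m))" if "kk < n" for kk
    using k that by (auto simp: H_def ac_prompt_def tgt_def)
  have "tf_readout (3*d + 2*m + 2) n (d + m) (\<lambda>i j. c * P i j) (\<lambda>i j. V i j / c) H k
     = H row n + 1 / real n * (\<Sum>kk\<le>n. (co * H tgt kk / c) * (c * (\<Sum>p<D. H p kk * Qv p)))"
    unfolding tf_readout_def lsa_out_def rowD
    by (simp only: Vs T flip: D_def)
  also have "\<dots> = H row n + 1 / real n * (\<Sum>kk<n. co * H tgt kk * td_err d gam phiV w r s kk)"
    using assms(10) by (simp add: lessThan_Suc_atMost[symmetric] Tn Tk mult.assoc)
  also have "\<dots> = (if k < m then lam_AC d m n alpha gam phiV phiP lam w r s a k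
        else w_AC d n beta gam phiV w r s (k - m))"
  proof (cases "k < m")
    case True
    have "(\<Sum>kk<n. co * H tgt kk * td_err d gam phiV w r s kk)
       = alpha * (\<Sum>i<n. gam ^ i * td_err d gam phiV w r s i * score m phiP lam (s i) (a i) k)"
      unfolding sum_distrib_left
      by (intro sum.cong refl) (simp add: Htgt True co_def)
    then show ?thesis using True by (simp add: Hrow lam_AC_def)
  next
    case False
    have "(\<Sum>kk<n. co * H tgt kk * td_err d gam phiV w r s kk)
       = beta * (\<Sum>i<n. td_err d gam phiV w r s i * phiV (s i) (k - m))"
      unfolding sum_distrib_left
      by (intro sum.cong refl) (simp add: Htgt False co_def)
    then show ?thesis using False by (simp add: Hrow w_AC_def)
  qed
  finally show "tf_readout (3*d + 2*m + 2) n (d + m) (\<lambda>i j. c * P i j) (\<lambda>i j. V i j / c)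
       (ac_prompt d m n gam phiV phiP lam w r s a) k
     = (if k < m then lam_AC d m n alpha gam phiV phiP lam w r s a k
        else w_AC d n beta gam phiV w r s (k - m))" unfolding H_def .
qed

end
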